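(* Let $\lambda \in \mathbb{R}$ and let $f \in C^4(\mathbb{R})$ be a real-valued solution, $f \not\equiv 0$, of the ODE $$-\lambda f' = -f^{(4)} + f(1-f), \qquad y \in \mathbb{R},$$ satisfying the boundary conditions $f(y) \to 1$ as $y \to -\infty$ and $f(y) \to 0$ as $y \to +\infty$, where the convergence is exponentially fast together with the derivatives, i.e. $f-1, f', f'', f'''$ tend to $0$ exponentially fast as $y \to -\infty$, and $f, f', f'', f'''$ tend to $0$ exponentially fast as $y \to +\infty$. Then $\lambda > 0$.
   Context: This is the ordinary differential equation for travelling-wave profiles $u(x,t) = f(x - \lambda t)$ of the fourth-order semilinear parabolic equation $u_t = -u_{xxxx} + u(1-u)$ on $\mathbb{R} \times \mathbb{R}_+$; $\lambda$ is the wave speed. *)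

theory Defs
  imports "HOL-Analysis.Analysis"
begin

definition exp_decay_at_top :: "(real \<Rightarrow> real) \<Rightarrow> bool" where
  "exp_decay_at_top g \<longleftrightarrow>
     (\<exists>C a. a > 0 \<and> (\<forall>\<^sub>F y in at_top. \<bar>g y\<bar> \<le> C * exp (- a * y)))"

definition exp_decay_at_bot :: "(real \<Rightarrow> real) \<Rightarrow> bool" where
  "exp_decay_at_bot g \<longleftrightarrow>
     (\<exists>C a. a > 0 \<and> (\<forall>\<^sub>F y in at_bot. \<bar>g y\<bar> \<le> C * exp (a * y)))"

end

theory Submission
  imports Defs
begin

lemma top_lim: assumes "exp_decay_at_top g" shows "(g \<longlongrightarrow> 0) at_top"
proof -
  from assms obtain C a where a: "a > 0" and ev: "\<forall>\<^sub>F y in at_top. \<bar>g y\<bar> \<le> C * exp (- a * y)"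
    unfolding exp_decay_at_top_def by blast
  have "LIM y at_top. - a * y :> at_bot"
    using a by (intro filterlim_tendsto_neg_mult_at_bot[OF tendsto_const] filterlim_ident) auto
  then have "((\<lambda>y. exp (- a * y)) \<longlongrightarrow> 0) at_top" by (rule filterlim_compose[OF exp_at_bot])
  then have "((\<lambda>y. C * exp (- a * y)) \<longlongrightarrow> 0) at_top" by (rule tendsto_mult_right_zero)
  then show ?thesis by (rule Lim_null_comparison[rotated]) (use ev in simp)
qed

lemma bot_lim: assumes "exp_decay_at_bot g" shows "(g \<longlongrightarrow> 0) at_bot"
proof -
  from assms obtain C a where a: "a > 0" and ev: "\<forall>\<^sub>F y in at_bot. \<bar>g y\<bar> \<le> C * exp (a * y)"
    unfolding exp_decay_at_bot_def by blast
  have "LIM y at_bot. a * y :> at_bot"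
    using a by (intro filterlim_tendsto_pos_mult_at_bot[OF tendsto_const] filterlim_ident) auto
  then have "((\<lambda>y. exp (a * y)) \<longlongrightarrow> 0) at_bot" by (rule filterlim_compose[OF exp_at_bot])
  then have "((\<lambda>y. C * exp (a * y)) \<longlongrightarrow> 0) at_bot" by (rule tendsto_mult_right_zero)
  then show ?thesis by (rule Lim_null_comparison[rotated]) (use ev in simp)
qed

theorem proposition2p1:
  fixes lam :: real and f f1 f2 f3 f4 :: "real \<Rightarrow> real"
  assumes d1: "\<And>y. (f has_real_derivative f1 y) (at y)"
      and d2: "\<And>y. (f1 has_real_derivative f2 y) (at y)"
      and d3: "\<And>y. (f2 has_real_derivative f3 y) (at y)"
      and d4: "\<And>y. (f3 has_real_derivative f4 y) (at y)"
      and c4: "continuous_on UNIV f4"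
      and ode: "\<And>y. - lam * f1 y = - f4 y + f y * (1 - f y)"
      and nz: "\<exists>y. f y \<noteq> 0"
      and bot0: "exp_decay_at_bot (\<lambda>y. f y - 1)"
      and bot1: "exp_decay_at_bot f1"
      and bot2: "exp_decay_at_bot f2"
      and bot3: "exp_decay_at_bot f3"
      and top0: "exp_decay_at_top f"
      and top1: "exp_decay_at_top f1"
      and top2: "exp_decay_at_top f2"
      and top3: "exp_decay_at_top f3"
  shows "lam > 0"
proof (rule ccontr)
  assume nl: "\<not> lam > 0"
  define H where "H y = f3 y * f1 y - f2 y ^ 2 / 2 - (f y ^ 2 / 2 - f y ^ 3 / 3)" for y
  have dH: "(H has_real_derivative lam * f1 y ^ 2) (at y)" for y
  proof -
    have e: "f4 y = lam * f1 y + f y * (1 - f y)" using ode[of y] by linarith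
    have HH: "H = (\<lambda>y. f3 y * f1 y - f2 y ^ 2 / 2 - (f y ^ 2 / 2 - f y ^ 3 / 3))"
      using H_def by auto
    show ?thesis unfolding HH
      by (rule derivative_eq_intros d1 d2 d3 d4 refl | simp add: e power2_eq_square power3_eq_cube algebra_simps)+
  qed
  have anti: "H x \<le> H y" if "y \<le> x" for x y
  proof (rule DERIV_nonpos_imp_nonincreasing[OF that])
    fix z
    have "lam * f1 z ^ 2 \<le> 0" using nl by (simp add: mult_nonpos_nonneg)
    then show "\<exists>D. (H has_real_derivative D) (at z) \<and> D \<le> 0" using dH[of z] by blast
  qed
  have ftop: "(f \<longlongrightarrow> 0) at_top" and f1top: "(f1 \<longlongrightarrow> 0) at_top"
    and f2top: "(f2 \<longlongrightarrow> 0) at_top" and f3top: "(f3 \<longlongrightarrow> 0) at_top"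
    using top_lim top0 top1 top2 top3 by auto
  have Htop: "(H \<longlongrightarrow> 0) at_top"
  proof -
    have "((\<lambda>y. f3 y * f1 y - f2 y ^ 2 / 2 - (f y ^ 2 / 2 - f y ^ 3 / 3)) \<longlongrightarrow>
       0 * 0 - 0 ^ 2 / 2 - (0 ^ 2 / 2 - 0 ^ 3 / 3)) at_top"
      by (intro tendsto_intros ftop f1top f2top f3top) simp_all
    then show ?thesis by (simp add: H_def[abs_def])
  qed
  have "((\<lambda>y. f y - 1) \<longlongrightarrow> 0) at_bot" using bot_lim bot0 by blast
  then have fbot: "(f \<longlongrightarrow> 1) at_bot"
    using tendsto_add[of "\<lambda>y. f y - 1" 0 at_bot "\<lambda>_. 1" 1] by simp
  have f1bot: "(f1 \<longlongrightarrow> 0) at_bot"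
    and f2bot: "(f2 \<longlongrightarrow> 0) at_bot" and f3bot: "(f3 \<longlongrightarrow> 0) at_bot"
    using bot_lim bot1 bot2 bot3 by auto
  have Hbot: "(H \<longlongrightarrow> - 1/6) at_bot"
  proof -
    have "((\<lambda>y. f3 y * f1 y - f2 y ^ 2 / 2 - (f y ^ 2 / 2 - f y ^ 3 / 3)) \<longlongrightarrow>
       0 * 0 - 0 ^ 2 / 2 - (1 ^ 2 / 2 - 1 ^ 3 / 3)) at_bot"
      by (intro tendsto_intros fbot f1bot f2bot f3bot) simp_all
    then show ?thesis by (simp add: H_def[abs_def])
  qed
  have Hpos: "0 \<le> H y" for y
  proof (rule tendsto_le[OF _ tendsto_const Htop])
    show "\<forall>\<^sub>F x in at_top. H x \<le> H y" using eventually_ge_at_top[of y] by eventually_elim (rule anti)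
  qed simp
  have "0 \<le> (- 1/6 :: real)"
    by (rule tendsto_le[OF _ Hbot tendsto_const]) (simp_all add: Hpos always_eventually)
  then show False by simp
qed

end
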